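(* Let $\mathcal{G}$ be a bottleneck routing game and let $f$ be any subpath-optimal Nash flow of $\mathcal{G}$. Then $B(f)=B^*(\mathcal{G})$.
   Context: A bottleneck routing game is $\mathcal{G}=(G(V,E),(c_e)_{e\in E},r)$: $G$ is a directed network with origin $s$ and destination $t$, each edge $e$ has a continuous non-decreasing latency function $c_e:[0,r]\to\mathbb{R}_{\ge0}$, and $r>0$ is the traffic rate. A flow is a nonnegative vector $f$ indexed by the simple $s$–$t$ paths with $\sum_p f_p=r$; $f_e=\sum_{p\ni e}f_p$; $b_p(f)=\max_{e\in p}c_e(f_e)$ for any path $p$; $B(f)=\max_{p:f_p>0}b_p(f)$. $B^*(\mathcal{G})=\min_f B(f)$ over feasible flows. $f$ is a Nash flow if for all $s$–$t$ paths $p,p'$ with $f_p>0$, $b_p(f)\le b_{p'}(f)$. For a flow $f$ and vertex $u$, $b_f(u)$ denotes the minimum over all $s$–$u$ paths $q$ of $\max_{e\in q}c_e(f_e)$. A flow $f$ is a subpath-optimal Nash flow if it is a Nash flow and for every vertex $u$ and every $s$–$t$ path $p$ with $f_p>0$ containing $u$, the bottleneck cost $\max_e c_e(f_e)$ over the edges of the $s$–$u$ part of $p$ equals $b_f(u)$. *)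

theory Defs
  imports "HOL-Analysis.Analysis"
begin

(* Network: edge type 'e (parallel edges allowed), finite edge set E,
   tail function src and head function dst mapping edges to vertices of type 'v. *)

fun walk :: "'e set \<Rightarrow> ('e \<Rightarrow> 'v) \<Rightarrow> ('e \<Rightarrow> 'v) \<Rightarrow> 'v \<Rightarrow> 'e list \<Rightarrow> 'v \<Rightarrow> bool" where
  "walk E src dst x [] y = (x = y)"
| "walk E src dst x (e # es) y = (e \<in> E \<and> src e = x \<and> walk E src dst (dst e) es y)"

fun vseq :: "('e \<Rightarrow> 'v) \<Rightarrow> 'v \<Rightarrow> 'e list \<Rightarrow> 'v list" where
  "vseq dst x [] = [x]"
| "vseq dst x (e # es) = x # vseq dst (dst e) es"

definition spath :: "'e set \<Rightarrow> ('e \<Rightarrow> 'v) \<Rightarrow> ('e \<Rightarrow> 'v) \<Rightarrow> 'v \<Rightarrow> 'e list \<Rightarrow> 'v \<Rightarrow> bool" where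
  "spath E src dst x p y \<longleftrightarrow> walk E src dst x p y \<and> distinct (vseq dst x p)"

definition stpaths :: "'e set \<Rightarrow> ('e \<Rightarrow> 'v) \<Rightarrow> ('e \<Rightarrow> 'v) \<Rightarrow> 'v \<Rightarrow> 'v \<Rightarrow> 'e list set" where
  "stpaths E src dst s t = {p. spath E src dst s p t}"

definition bottleneck_game :: "'e set \<Rightarrow> ('e \<Rightarrow> real \<Rightarrow> real) \<Rightarrow> real \<Rightarrow> bool" where
  "bottleneck_game E c r \<longleftrightarrow> finite E \<and> r > 0 \<and>
     (\<forall>e\<in>E. continuous_on {0..r} (c e) \<and> mono_on {0..r} (c e) \<and> (\<forall>x\<in>{0..r}. 0 \<le> c e x))"

definition is_flow :: "'e set \<Rightarrow> ('e \<Rightarrow> 'v) \<Rightarrow> ('e \<Rightarrow> 'v) \<Rightarrow> 'v \<Rightarrow> 'v \<Rightarrow> real \<Rightarrow> ('e list \<Rightarrow> real) \<Rightarrow> bool" where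
  "is_flow E src dst s t r f \<longleftrightarrow> (\<forall>p. 0 \<le> f p) \<and> (\<forall>p. f p \<noteq> 0 \<longrightarrow> p \<in> stpaths E src dst s t)
      \<and> sum f (stpaths E src dst s t) = r"

definition edge_flow :: "'e set \<Rightarrow> ('e \<Rightarrow> 'v) \<Rightarrow> ('e \<Rightarrow> 'v) \<Rightarrow> 'v \<Rightarrow> 'v \<Rightarrow> ('e list \<Rightarrow> real) \<Rightarrow> 'e \<Rightarrow> real" where
  "edge_flow E src dst s t f e = sum f {p \<in> stpaths E src dst s t. e \<in> set p}"

(* bottleneck cost max_{e in q} c_e(f_e) of an edge list q; the empty list has cost 0
   (latencies are nonnegative, so inserting 0 does not change nonempty maxima) *)
definition bcost :: "'e set \<Rightarrow> ('e \<Rightarrow> 'v) \<Rightarrow> ('e \<Rightarrow> 'v) \<Rightarrow> 'v \<Rightarrow> 'v \<Rightarrow> ('e \<Rightarrow> real \<Rightarrow> real) \<Rightarrow> ('e list \<Rightarrow> real) \<Rightarrow> 'e list \<Rightarrow> real" where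
  "bcost E src dst s t c f q = Max (insert 0 ((\<lambda>e. c e (edge_flow E src dst s t f e)) ` set q))"

definition Bf :: "'e set \<Rightarrow> ('e \<Rightarrow> 'v) \<Rightarrow> ('e \<Rightarrow> 'v) \<Rightarrow> 'v \<Rightarrow> 'v \<Rightarrow> ('e \<Rightarrow> real \<Rightarrow> real) \<Rightarrow> ('e list \<Rightarrow> real) \<Rightarrow> real" where
  "Bf E src dst s t c f = Max {bcost E src dst s t c f p | p. p \<in> stpaths E src dst s t \<and> f p > 0}"

definition Bstar :: "'e set \<Rightarrow> ('e \<Rightarrow> 'v) \<Rightarrow> ('e \<Rightarrow> 'v) \<Rightarrow> 'v \<Rightarrow> 'v \<Rightarrow> ('e \<Rightarrow> real \<Rightarrow> real) \<Rightarrow> real \<Rightarrow> real" where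
  "Bstar E src dst s t c r = Inf {Bf E src dst s t c g | g. is_flow E src dst s t r g}"

definition nash_flow :: "'e set \<Rightarrow> ('e \<Rightarrow> 'v) \<Rightarrow> ('e \<Rightarrow> 'v) \<Rightarrow> 'v \<Rightarrow> 'v \<Rightarrow> ('e \<Rightarrow> real \<Rightarrow> real) \<Rightarrow> real \<Rightarrow> ('e list \<Rightarrow> real) \<Rightarrow> bool" where
  "nash_flow E src dst s t c r f \<longleftrightarrow> is_flow E src dst s t r f \<and>
     (\<forall>p\<in>stpaths E src dst s t. \<forall>p'\<in>stpaths E src dst s t. f p > 0 \<longrightarrow>
        bcost E src dst s t c f p \<le> bcost E src dst s t c f p')"

definition bvert :: "'e set \<Rightarrow> ('e \<Rightarrow> 'v) \<Rightarrow> ('e \<Rightarrow> 'v) \<Rightarrow> 'v \<Rightarrow> 'v \<Rightarrow> ('e \<Rightarrow> real \<Rightarrow> real) \<Rightarrow> ('e list \<Rightarrow> real) \<Rightarrow> 'v \<Rightarrow> real" where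
  "bvert E src dst s t c f u = Inf {bcost E src dst s t c f q | q. spath E src dst s q u}"

(* subpath-optimal Nash flow: for every used path p and every vertex u on p
   (the endpoint of the prefix take k p), the prefix s-u has bottleneck b_f(u) *)
definition subpath_optimal_nash :: "'e set \<Rightarrow> ('e \<Rightarrow> 'v) \<Rightarrow> ('e \<Rightarrow> 'v) \<Rightarrow> 'v \<Rightarrow> 'v \<Rightarrow> ('e \<Rightarrow> real \<Rightarrow> real) \<Rightarrow> real \<Rightarrow> ('e list \<Rightarrow> real) \<Rightarrow> bool" where
  "subpath_optimal_nash E src dst s t c r f \<longleftrightarrow> nash_flow E src dst s t c r f \<and>
     (\<forall>p\<in>stpaths E src dst s t. f p > 0 \<longrightarrow> (\<forall>k\<le>length p.
        bcost E src dst s t c f (take k p) = bvert E src dst s t c f (last (vseq dst s (take k p)))))"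

end

theory Submission
  imports Defs
begin

lemma vseq_eq: "vseq dst x p = x # map dst p"
  by (induction p arbitrary: x) auto

lemma walk_last: "walk E src dst x p y \<Longrightarrow> y = last (vseq dst x p)"
  by (induction p arbitrary: x) (auto simp: vseq_eq)

lemma walk_take: "walk E src dst x p y \<Longrightarrow> walk E src dst x (take k p) (last (vseq dst x (take k p)))"
proof (induction p arbitrary: x k)
  case Nil then show ?case by simp
next
  case (Cons a p)
  then show ?case by (cases k) (auto simp: vseq_eq)
qed

lemma walk_take_src: "walk E src dst x p y \<Longrightarrow> k < length p \<Longrightarrow> last (vseq dst x (take k p)) = src (p!k)"
proof (induction p arbitrary: x k)
  case Nil then show ?case by simp
next
  case (Cons a p)
  then show ?case by (cases k) (auto simp: vseq_eq)
qed

lemma take_Suc_dst: "k < length p \<Longrightarrow> last (vseq dst x (take (Suc k) p)) = dst (p!k)"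
  by (simp add: vseq_eq take_Suc_conv_app_nth)

lemma spath_take: "spath E src dst x p y \<Longrightarrow> spath E src dst x (take k p) (last (vseq dst x (take k p)))"
  unfolding spath_def
proof (intro conjI)
  assume a: "walk E src dst x p y \<and> distinct (vseq dst x p)"
  then show "walk E src dst x (take k p) (last (vseq dst x (take k p)))" using walk_take by metis
  have "vseq dst x (take k p) = take (Suc k) (vseq dst x p)" by (simp add: vseq_eq take_map)
  then show "distinct (vseq dst x (take k p))" using a by (simp add: distinct_take)
qed

lemma walk_snoc: "walk E src dst x q y \<Longrightarrow> e \<in> E \<Longrightarrow> src e = y \<Longrightarrow> walk E src dst x (q @ [e]) (dst e)"
  by (induction q arbitrary: x) auto

lemma walk_set: "walk E src dst x q y \<Longrightarrow> set q \<subseteq> E"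
  by (induction q arbitrary: x) auto

lemma vseq_vertex: "w \<in> set (vseq dst x q) \<Longrightarrow> \<exists>k\<le>length q. last (vseq dst x (take k q)) = w"
proof -
  assume "w \<in> set (vseq dst x q)"
  then have "w = x \<or> (\<exists>i<length q. w = dst (q!i))" by (auto simp: vseq_eq in_set_conv_nth)
  then show ?thesis
  proof
    assume "w = x" then show ?thesis by (intro exI[of _ 0]) (simp add: vseq_eq)
  next
    assume "\<exists>i<length q. w = dst (q!i)"
    then obtain i where "i < length q" "w = dst (q!i)" by blast
    then show ?thesis using take_Suc_dst[of i q dst x] by (intro exI[of _ "Suc i"]) auto
  qed
qed

lemma crossing: "walk E src dst x p y \<Longrightarrow> x \<in> S \<Longrightarrow> y \<notin> S \<Longrightarrow> \<exists>e\<in>set p. e \<in> E \<and> src e \<in> S \<and> dst e \<notin> S"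
  by (induction p arbitrary: x) auto

lemma spath_distinct: "spath E src dst x p y \<Longrightarrow> distinct p"
  unfolding spath_def by (auto simp: vseq_eq distinct_map)

lemma finite_stpaths: "finite E \<Longrightarrow> finite (stpaths E src dst s t)"
proof -
  assume "finite E"
  then have "finite {xs. set xs \<subseteq> E \<and> distinct xs}" by (rule finite_subset_distinct)
  moreover have "stpaths E src dst s t \<subseteq> {xs. set xs \<subseteq> E \<and> distinct xs}"
  proof
    fix p assume "p \<in> stpaths E src dst s t"
    then have sp: "spath E src dst s p t" unfolding stpaths_def by simp
    then have "distinct p" by (rule spath_distinct)
    moreover have "set p \<subseteq> E" using sp walk_set unfolding spath_def by metis
    ultimately show "p \<in> {xs. set xs \<subseteq> E \<and> distinct xs}" by simp
  qed
  ultimately show ?thesis by (rule finite_subset[rotated])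
qed

lemma bcost_nonneg: "0 \<le> bcost E src dst s t c f q"
  unfolding bcost_def by (rule Max_ge) auto

lemma bcost_ge: "e \<in> set q \<Longrightarrow> c e (edge_flow E src dst s t f e) \<le> bcost E src dst s t c f q"
  unfolding bcost_def by (rule Max_ge) auto

lemma bcost_mono: "set q \<subseteq> set q' \<Longrightarrow> bcost E src dst s t c f q \<le> bcost E src dst s t c f q'"
  unfolding bcost_def by (rule Max_mono) auto

lemma bcost_snoc: "bcost E src dst s t c f (q @ [e]) = max (c e (edge_flow E src dst s t f e)) (bcost E src dst s t c f q)"
proof -
  have "bcost E src dst s t c f (q @ [e]) = Max (insert (c e (edge_flow E src dst s t f e)) (insert 0 ((\<lambda>e. c e (edge_flow E src dst s t f e)) ` set q)))"
    unfolding bcost_def by (simp add: insert_commute)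
  also have "\<dots> = max (c e (edge_flow E src dst s t f e)) (bcost E src dst s t c f q)"
    unfolding bcost_def by (subst Max_insert) auto
  finally show ?thesis .
qed

lemma bvert_le: "spath E src dst s q u \<Longrightarrow> bvert E src dst s t c f u \<le> bcost E src dst s t c f q"
  unfolding bvert_def
  by (rule cInf_lower) (auto intro: bdd_belowI[where m=0] simp: bcost_nonneg)

lemma edge_flow_nonneg: "is_flow E src dst s t r g \<Longrightarrow> 0 \<le> edge_flow E src dst s t g e"
  unfolding edge_flow_def is_flow_def by (auto intro: sum_nonneg)

lemma edge_flow_le: "finite E \<Longrightarrow> is_flow E src dst s t r g \<Longrightarrow> edge_flow E src dst s t g e \<le> r"
  unfolding edge_flow_def is_flow_def
  by (metis (no_types, lifting) finite_stpaths mem_Collect_eq subsetI sum_mono2)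

lemma sum_cut: "finite C \<Longrightarrow> finite E \<Longrightarrow>
  (\<Sum>e\<in>C. edge_flow E src dst s t g e) = (\<Sum>p\<in>stpaths E src dst s t. g p * card (C \<inter> set p))"
proof -
  assume fC: "finite C" and fE: "finite E"
  have "(\<Sum>e\<in>C. edge_flow E src dst s t g e) = (\<Sum>e\<in>C. \<Sum>p\<in>stpaths E src dst s t. if e \<in> set p then g p else 0)"
    unfolding edge_flow_def by (simp add: sum.inter_filter fE finite_stpaths)
  also have "\<dots> = (\<Sum>p\<in>stpaths E src dst s t. \<Sum>e\<in>C. if e \<in> set p then g p else 0)"
    by (rule sum.swap)
  also have "\<dots> = (\<Sum>p\<in>stpaths E src dst s t. g p * card (C \<inter> set p))"
  proof (rule sum.cong[OF refl])
    fix p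
    have "(\<Sum>e\<in>C. if e \<in> set p then g p else 0) = (\<Sum>e\<in>{e\<in>C. e \<in> set p}. g p)"
      by (rule sum.inter_filter[OF fC, symmetric])
    also have "\<dots> = g p * card (C \<inter> set p)" by (simp add: Int_def mult.commute)
    finally show "(\<Sum>e\<in>C. if e \<in> set p then g p else 0) = g p * card (C \<inter> set p)" .
  qed
  finally show ?thesis .
qed

theorem proposition3:
  fixes E :: "'e set" and src dst :: "'e \<Rightarrow> 'v" and s t :: 'v
    and c :: "'e \<Rightarrow> real \<Rightarrow> real" and r :: real and f :: "'e list \<Rightarrow> real"
  assumes "bottleneck_game E c r"
    and "subpath_optimal_nash E src dst s t c r f"
  shows "Bf E src dst s t c f = Bstar E src dst s t c r"
proof -
  from assms(1) have fE: "finite E" and rpos: "r > 0"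
    and mono: "\<And>e. e \<in> E \<Longrightarrow> mono_on {0..r} (c e)" unfolding bottleneck_game_def by auto
  from assms(2) have nash: "nash_flow E src dst s t c r f"
    and sub: "\<And>p k. p \<in> stpaths E src dst s t \<Longrightarrow> f p > 0 \<Longrightarrow> k \<le> length p \<Longrightarrow>
        bcost E src dst s t c f (take k p) = bvert E src dst s t c f (last (vseq dst s (take k p)))"
    unfolding subpath_optimal_nash_def by auto
  from nash have flow: "is_flow E src dst s t r f"
    and nashc: "\<And>p p'. p \<in> stpaths E src dst s t \<Longrightarrow> p' \<in> stpaths E src dst s t \<Longrightarrow> f p > 0 \<Longrightarrow>
       bcost E src dst s t c f p \<le> bcost E src dst s t c f p'"
    unfolding nash_flow_def by auto
  define P where "P = stpaths E src dst s t"
  have finP: "finite P" unfolding P_def using fE by (rule finite_stpaths)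
  define bc where "bc = bcost E src dst s t c f"
  define B where "B = Bf E src dst s t c f"
  have used_ex: "\<exists>p\<in>P. g p > 0" if "is_flow E src dst s t r g" for g
  proof (rule ccontr)
    assume na: "\<not> (\<exists>p\<in>P. g p > 0)"
    have "\<forall>p\<in>P. g p = 0"
    proof
      fix p assume "p \<in> P"
      then have "\<not> g p > 0" using na by blast
      moreover have "0 \<le> g p" using that unfolding is_flow_def by blast
      ultimately show "g p = 0" by simp
    qed
    then have "sum g P = 0" by simp
    with that rpos show False unfolding is_flow_def P_def by simp
  qed
  have finB: "finite {bcost E src dst s t c g p | p. p \<in> P \<and> g p > 0}" for g
  proof -
    have "{bcost E src dst s t c g p | p. p \<in> P \<and> g p > 0} = (bcost E src dst s t c g) ` {p\<in>P. g p > 0}"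
      by auto
    then show ?thesis using finP by simp
  qed
  have Bf_ge: "x \<le> Bf E src dst s t c g" if "p \<in> P" "g p > 0" "x \<le> bcost E src dst s t c g p" for g p x
  proof -
    have "bcost E src dst s t c g p \<le> Bf E src dst s t c g"
      unfolding Bf_def P_def[symmetric] by (rule Max_ge[OF finB]) (use that in auto)
    then show ?thesis using that by linarith
  qed
  obtain p0 where p0: "p0 \<in> P" "f p0 > 0" "bc p0 = B"
  proof -
    obtain p where "p \<in> P" "f p > 0" using used_ex[OF flow] by blast
    then have ne: "{bcost E src dst s t c f p | p. p \<in> P \<and> f p > 0} \<noteq> {}" by blast
    have "B \<in> {bcost E src dst s t c f p | p. p \<in> P \<and> f p > 0}"
      unfolding B_def Bf_def P_def[symmetric] by (rule Max_in[OF finB ne])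
    then show ?thesis using that unfolding bc_def by blast
  qed
  have key: "B \<le> Bf E src dst s t c g" if g: "is_flow E src dst s t r g" for g
  proof (cases "B \<le> 0")
    case True
    obtain p where "p \<in> P" "g p > 0" using used_ex[OF g] by blast
    then show ?thesis using True bcost_nonneg[of E src dst s t c g p] Bf_ge[of p g B] by linarith
  next
    case False
    then have Bpos: "B > 0" by simp
    define S where "S = {u. \<exists>q. spath E src dst s q u \<and> bc q < B}"
    have sS: "s \<in> S"
    proof -
      have "spath E src dst s [] s" unfolding spath_def by simp
      moreover have "bc [] = 0" unfolding bc_def bcost_def by simp
      ultimately show ?thesis unfolding S_def using Bpos by (intro CollectI exI[of _ "[]"]) simp
    qed
    have tS: "t \<notin> S"
    proof
      assume "t \<in> S"
      then obtain q where "spath E src dst s q t" "bc q < B" unfolding S_def by blast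
      then have "q \<in> P" unfolding P_def stpaths_def by simp
      with p0 nashc[of p0 q] \<open>bc q < B\<close> show False unfolding bc_def P_def by auto
    qed
    have cutcost: "B \<le> c e (edge_flow E src dst s t f e)" if e: "e \<in> E" "src e \<in> S" "dst e \<notin> S" for e
    proof -
      obtain q where q: "spath E src dst s q (src e)" "bc q < B" using e(2) unfolding S_def by blast
      have nd: "dst e \<notin> set (vseq dst s q)"
      proof
        assume "dst e \<in> set (vseq dst s q)"
        then obtain k where "k \<le> length q" "last (vseq dst s (take k q)) = dst e"
          using vseq_vertex by metis
        then have sp: "spath E src dst s (take k q) (dst e)" using spath_take[OF q(1), of k] by simp
        have "bc (take k q) \<le> bc q" unfolding bc_def by (rule bcost_mono) (rule set_take_subset)
        then show False using sp q(2) e(3) unfolding S_def by auto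
      qed
      have "spath E src dst s (q @ [e]) (dst e)"
        using q(1) nd e(1) walk_snoc[of E src dst s q "src e" e] unfolding spath_def
        by (auto simp: vseq_eq)
      with e(3) have "\<not> bc (q @ [e]) < B" unfolding S_def by blast
      then show ?thesis using q(2) unfolding bc_def bcost_snoc by linarith
    qed
    define C where "C = {e\<in>E. src e \<in> S \<and> dst e \<notin> S}"
    have finC: "finite C" using fE unfolding C_def by simp
    have cross_g: "1 \<le> card (C \<inter> set p)" if "p \<in> P" for p
    proof -
      have "walk E src dst s p t" using that unfolding P_def stpaths_def spath_def by simp
      then obtain e where "e \<in> set p" "e \<in> E" "src e \<in> S" "dst e \<notin> S"
        using crossing[of E src dst s p t S] sS tS by blast
      then have "C \<inter> set p \<noteq> {}" unfolding C_def by blast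
      then show ?thesis using finC by (simp add: Suc_le_eq card_gt_0_iff)
    qed
    have cross_f: "card (C \<inter> set p) \<le> 1" if p: "p \<in> P" "f p > 0" for p
    proof -
      have w: "walk E src dst s p t" using p unfolding P_def stpaths_def spath_def by simp
      have no2: False if ij: "i < j" "j < length p" "p!i \<in> C" "p!j \<in> C" for i j
      proof -
        have "p!i \<in> set (take j p)" using ij by (metis in_set_conv_nth length_take min.absorb4 nth_take order.strict_trans)
        then have "c (p!i) (edge_flow E src dst s t f (p!i)) \<le> bc (take j p)"
          unfolding bc_def by (rule bcost_ge)
        moreover have "B \<le> c (p!i) (edge_flow E src dst s t f (p!i))" using ij(3) cutcost unfolding C_def by blast
        moreover have "bc (take j p) = bvert E src dst s t c f (src (p!j))"
          using sub[of p j] p ij walk_take_src[OF w ij(2)] unfolding bc_def P_def by simp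
        moreover obtain q where "spath E src dst s q (src (p!j))" "bc q < B"
          using ij(4) unfolding C_def S_def by blast
        moreover have "bvert E src dst s t c f (src (p!j)) \<le> bc q"
          using bvert_le calculation(4) unfolding bc_def by metis
        ultimately show False by linarith
      qed
      have "\<forall>a\<in>C \<inter> set p. \<forall>b\<in>C \<inter> set p. a = b"
      proof (intro ballI)
        fix a b assume a: "a \<in> C \<inter> set p" and b: "b \<in> C \<inter> set p"
        obtain i where i: "i < length p" "p!i = a" using a by (auto simp: in_set_conv_nth)
        obtain j where j: "j < length p" "p!j = b" using b by (auto simp: in_set_conv_nth)
        show "a = b"
        proof (cases i j rule: linorder_cases)
          case less then show ?thesis using no2[of i j] i j a b by auto
        next
          case equal then show ?thesis using i j by simp
        next
          case greater then show ?thesis using no2[of j i] i j a b by auto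
        qed
      qed
      then show ?thesis using finC by (simp add: card_le_Suc0_iff_eq)
    qed
    have fnn: "\<And>p. 0 \<le> f p" and gnn: "\<And>p. 0 \<le> g p" using flow g unfolding is_flow_def by auto
    have sumf: "(\<Sum>e\<in>C. edge_flow E src dst s t f e) \<le> r"
    proof -
      have "(\<Sum>e\<in>C. edge_flow E src dst s t f e) = (\<Sum>p\<in>P. f p * card (C \<inter> set p))"
        unfolding P_def by (rule sum_cut[OF finC fE])
      also have "\<dots> \<le> (\<Sum>p\<in>P. f p)"
      proof (rule sum_mono)
        fix p assume "p \<in> P"
        show "f p * card (C \<inter> set p) \<le> f p"
        proof (cases "f p > 0")
          case True
          then have "real (card (C \<inter> set p)) \<le> 1" using cross_f \<open>p \<in> P\<close> by simp
          then show ?thesis using True by (simp add: mult_le_cancel_left1)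
        next
          case False
          then have "f p = 0" using fnn[of p] by simp
          then show ?thesis by simp
        qed
      qed
      also have "\<dots> = r" using flow unfolding is_flow_def P_def by simp
      finally show ?thesis .
    qed
    have sumg: "r \<le> (\<Sum>e\<in>C. edge_flow E src dst s t g e)"
    proof -
      have "r = (\<Sum>p\<in>P. g p)" using g unfolding is_flow_def P_def by simp
      also have "\<dots> \<le> (\<Sum>p\<in>P. g p * card (C \<inter> set p))"
      proof (rule sum_mono)
        fix p assume "p \<in> P"
        then have "1 \<le> real (card (C \<inter> set p))" using cross_g by simp
        then show "g p \<le> g p * card (C \<inter> set p)" using gnn[of p]
          by (simp add: mult_le_cancel_left1)
      qed
      also have "\<dots> = (\<Sum>e\<in>C. edge_flow E src dst s t g e)"
        unfolding P_def by (rule sum_cut[OF finC fE, symmetric])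
      finally show ?thesis .
    qed
    obtain e where e: "e \<in> C" "edge_flow E src dst s t g e > 0"
      "edge_flow E src dst s t f e \<le> edge_flow E src dst s t g e"
    proof (rule ccontr)
      assume na: "\<not> thesis"
      have "\<forall>e\<in>C. edge_flow E src dst s t g e \<le> edge_flow E src dst s t f e"
      proof
        fix e assume "e \<in> C"
        show "edge_flow E src dst s t g e \<le> edge_flow E src dst s t f e"
        proof (cases "edge_flow E src dst s t g e > 0")
          case True then show ?thesis using na that \<open>e \<in> C\<close> by force
        next
          case False then show ?thesis using edge_flow_nonneg[OF g, of e] edge_flow_nonneg[OF flow, of e] by linarith
        qed
      qed
      moreover have "\<exists>e\<in>C. edge_flow E src dst s t g e > 0"
      proof (rule ccontr)
        assume "\<not> (\<exists>e\<in>C. edge_flow E src dst s t g e > 0)"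
        then have "\<forall>e\<in>C. edge_flow E src dst s t g e = 0" using edge_flow_nonneg[OF g] by (meson antisym not_le)
        then have "(\<Sum>e\<in>C. edge_flow E src dst s t g e) = 0" by simp
        then show False using sumg rpos by linarith
      qed
      then have "\<exists>e\<in>C. edge_flow E src dst s t g e < edge_flow E src dst s t f e"
        using na that by force
      ultimately have "(\<Sum>e\<in>C. edge_flow E src dst s t g e) < (\<Sum>e\<in>C. edge_flow E src dst s t f e)"
        by (intro sum_strict_mono_ex1[OF finC])
      then show False using sumf sumg by linarith
    qed
    obtain p where p: "p \<in> P" "e \<in> set p" "g p > 0"
    proof (rule ccontr)
      assume na: "\<not> thesis"
      have "\<forall>p\<in>{p \<in> P. e \<in> set p}. g p = 0"
      proof
        fix p assume "p \<in> {p \<in> P. e \<in> set p}"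
        then have "p \<in> P" "e \<in> set p" by auto
        then have "\<not> g p > 0" using na that by blast
        then show "g p = 0" using gnn[of p] by simp
      qed
      then have "edge_flow E src dst s t g e = 0" unfolding edge_flow_def P_def[symmetric] by simp
      then show False using e(2) by simp
    qed
    have eE: "e \<in> E" using e(1) unfolding C_def by simp
    have "B \<le> c e (edge_flow E src dst s t f e)" using cutcost e(1) unfolding C_def by blast
    also have "\<dots> \<le> c e (edge_flow E src dst s t g e)"
      using mono_onD[OF mono[OF eE]] e(3) edge_flow_nonneg[OF flow, of e] edge_flow_le[OF fE flow, of e]
        edge_flow_nonneg[OF g, of e] edge_flow_le[OF fE g, of e] by simp
    also have "\<dots> \<le> bcost E src dst s t c g p" by (rule bcost_ge[OF p(2)])
    finally show ?thesis using Bf_ge[of p g, OF p(1) p(3)] by simp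
  qed
  show ?thesis unfolding Bstar_def B_def[symmetric]
    by (rule cInf_eq_minimum[symmetric]) (use flow key B_def in blast)+
qed

end
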